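(* Let a control system $S$ and a target system $T$ have ontic state spaces $\Omega_S$ and $\Omega_T$ (each $\mathbb{Z}_d^{2n}$ or $\mathbb{R}^{2n}$ for the respective number of elementary systems, of the same type). Let $V_S^i$ be an isotropic subspace of $\Omega_S$ and $\vec v_{s,1}^i,\dots,\vec v_{s,k}^i\in\Omega_S$ valuations such that the cosets $(V_S^i)^\perp+\vec v_{s,j}^i$, $j=1,\dots,k$, form a partition of $\Omega_S$, so that $(V_S^i,\vec v_{s,j}^i)$ are the possible states of $S$. Let $(V_T^i,\vec v_T^i)$ be the initial valid epistemic state of $T$ and let $S_{ST}$ be a symplectic transformation of $\Omega_S\oplus\Omega_T$. For each $j$, let $(V_T^{f,j},\vec v_T^{f,j})$ denote the marginal on $T$ of the state obtained by applying $S_{ST}$ to the product state $(V_S^i\oplus V_T^i,\ \vec v_{s,j}^i\oplus\vec v_T^i)$. Then for any $j,l$, the marginal target states for $j$ and $l$ are either identical or orthogonal. Moreover, grouping the indices $j$ into classes of identical marginal target states, every class contains the same number of indices.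
   Context: Toy theory (quadrature formalism): ontic states $\vec m\in\Omega$, coordinates $(q_1,p_1,\dots)$; observables $\vec f\in\Omega$ with value $\vec f^T\vec m$; Poisson bracket $[\vec f,\vec g]=\sum_i(f_{2i-1}g_{2i}-f_{2i}g_{2i-1})$. A valid epistemic state $(V,\vec v)$ has $V$ an isotropic subspace/submodule ($[\vec f,\vec g]=0$ for $\vec f,\vec g\in V$); its compatible ontic states are $V^\perp+\vec v$ with $V^\perp=\{\vec m:\vec f^T\vec m=0\ \forall\vec f\in V\}$, uniformly distributed. A symplectic matrix (preserving the Poisson bracket) $\Sigma$ acts by $(V,\vec v)\mapsto((\Sigma^T)^{-1}V,\Sigma\vec v)$. The marginal on $T$ of a joint state is the projection of the set of compatible ontic states (and of the uniform distribution) onto $\Omega_T$. Two epistemic states are orthogonal if their sets of compatible ontic states are disjoint. Physically, this describes an agent preparing $T$ conditionally on the outcome $j$ of a measurement of $S$. *)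

theory Defs
  imports Complex_Main
begin

text \<open>Scalars: either Z_d (d >= 2) or the reals, up to ring isomorphism.\<close>

definition is_Zd_ring :: "'a::comm_ring_1 itself \<Rightarrow> bool" where
  "is_Zd_ring _ \<longleftrightarrow> finite (UNIV::'a set) \<and> card (UNIV::'a set) \<ge> 2 \<and> surj (of_int :: int \<Rightarrow> 'a)"

definition is_real_ring :: "'a::comm_ring_1 itself \<Rightarrow> bool" where
  "is_real_ring _ \<longleftrightarrow> (\<exists>\<phi>::'a \<Rightarrow> real. bij \<phi> \<and> \<phi> 1 = 1 \<and>
      (\<forall>x y. \<phi> (x + y) = \<phi> x + \<phi> y \<and> \<phi> (x * y) = \<phi> x * \<phi> y))"

text \<open>Ontic states / observables of n elementary systems indexed by the finite type 'n:
  functions on 'n \<times> bool, where (i,False) is q_i and (i,True) is p_i.\<close>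

type_synonym ('a,'n) vecs = "'n \<times> bool \<Rightarrow> 'a"
type_synonym ('a,'n) epi = "('a,'n) vecs set \<times> ('a,'n) vecs"

definition dotp :: "('a::comm_ring_1,'n::finite) vecs \<Rightarrow> ('a,'n) vecs \<Rightarrow> 'a" where
  "dotp f m = (\<Sum>i\<in>UNIV. f i * m i)"

definition pbracket :: "('a::comm_ring_1,'n::finite) vecs \<Rightarrow> ('a,'n) vecs \<Rightarrow> 'a" where
  "pbracket f g = (\<Sum>i\<in>UNIV. f (i,False) * g (i,True) - f (i,True) * g (i,False))"

definition submodule :: "('a::comm_ring_1,'n) vecs set \<Rightarrow> bool" where
  "submodule V \<longleftrightarrow> (\<lambda>_. 0) \<in> V \<and> (\<forall>f\<in>V. \<forall>g\<in>V. (\<lambda>i. f i + g i) \<in> V)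
     \<and> (\<forall>c. \<forall>f\<in>V. (\<lambda>i. c * f i) \<in> V)"

definition isotropic :: "('a::comm_ring_1,'n::finite) vecs set \<Rightarrow> bool" where
  "isotropic V \<longleftrightarrow> submodule V \<and> (\<forall>f\<in>V. \<forall>g\<in>V. pbracket f g = 0)"

definition perp :: "('a::comm_ring_1,'n::finite) vecs set \<Rightarrow> ('a,'n) vecs set" where
  "perp V = {m. \<forall>f\<in>V. dotp f m = 0}"

text \<open>Set of ontic states compatible with an epistemic state (V, v): V^perp + v.\<close>
definition compat :: "('a::comm_ring_1,'n::finite) epi \<Rightarrow> ('a,'n) vecs set" where
  "compat E = (\<lambda>m. \<lambda>i. m i + snd E i) ` perp (fst E)"

type_synonym ('a,'n) mat = "'n \<times> bool \<Rightarrow> 'n \<times> bool \<Rightarrow> 'a"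

definition mat_app :: "('a::comm_ring_1,'n::finite) mat \<Rightarrow> ('a,'n) vecs \<Rightarrow> ('a,'n) vecs" where
  "mat_app M v = (\<lambda>i. \<Sum>j\<in>UNIV. M i j * v j)"

definition mat_transp :: "('a,'n) mat \<Rightarrow> ('a,'n) mat" where
  "mat_transp M = (\<lambda>i j. M j i)"

definition symplectic :: "('a::comm_ring_1,'n::finite) mat \<Rightarrow> bool" where
  "symplectic M \<longleftrightarrow> (\<forall>f g. pbracket (mat_app M f) (mat_app M g) = pbracket f g)"

text \<open>Action of a symplectic matrix: (V,v) maps to ((M^T)^{-1} V, M v), where
  (M^T)^{-1} V = {f. M^T f \<in> V}.\<close>
definition sympl_act :: "('a::comm_ring_1,'n::finite) mat \<Rightarrow> ('a,'n) epi \<Rightarrow> ('a,'n) epi" where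
  "sympl_act M E = ({f. mat_app (mat_transp M) f \<in> fst E}, mat_app M (snd E))"

text \<open>Direct sums: systems S ('s) and T ('t) combine to index type 's + 't.\<close>
definition projS :: "('a,'s+'t) vecs \<Rightarrow> ('a,'s) vecs" where
  "projS m = (\<lambda>(i,b). m (Inl i, b))"

definition projT :: "('a,'s+'t) vecs \<Rightarrow> ('a,'t) vecs" where
  "projT m = (\<lambda>(i,b). m (Inr i, b))"

definition vsum :: "('a,'s) vecs \<Rightarrow> ('a,'t) vecs \<Rightarrow> ('a,'s+'t) vecs" where
  "vsum u w = (\<lambda>(x,b). case x of Inl i \<Rightarrow> u (i,b) | Inr i \<Rightarrow> w (i,b))"

definition subsum :: "('a,'s) vecs set \<Rightarrow> ('a,'t) vecs set \<Rightarrow> ('a,'s+'t) vecs set" where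
  "subsum V W = {f. projS f \<in> V \<and> projT f \<in> W}"

definition prod_state :: "('a,'s) epi \<Rightarrow> ('a,'t) epi \<Rightarrow> ('a,'s+'t) epi" where
  "prod_state E F = (subsum (fst E) (fst F), vsum (snd E) (snd F))"

text \<open>Marginal on T: projection of the set of compatible ontic states (the uniform
  distribution on it pushes forward to the uniform distribution on this image).\<close>
definition marginalT :: "('a::comm_ring_1,'s::finite+'t::finite) epi \<Rightarrow> ('a,'t) vecs set" where
  "marginalT E = projT ` compat E"

end

theory Submission
  imports Defs "HOL-Library.Function_Algebras"
begin

lemma generic_card_le:
  fixes vs :: "nat \<Rightarrow> 'g::ab_group_add" and psi :: "'g \<Rightarrow> 'h::ab_group_add"
  assumes Qm: "\<And>a b. a \<in> Q \<Longrightarrow> b \<in> Q \<Longrightarrow> a - b \<in> Q"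
    and Pm: "\<And>a b. a \<in> P \<Longrightarrow> b \<in> P \<Longrightarrow> a - b \<in> P"
    and psim: "\<And>a b. psi (a - b) = psi a - psi b"
    and psiQ: "\<And>q. q \<in> Q \<Longrightarrow> psi q \<in> P"
    and cover: "\<And>x. \<exists>j\<in>{1..k}. x - vs j \<in> Q"
    and disj: "\<And>j l. j \<in> {1..k} \<Longrightarrow> l \<in> {1..k} \<Longrightarrow> vs j - vs l \<in> Q \<Longrightarrow> j = l"
    and jl: "l \<in> {1..k}"
  shows "card {j'\<in>{1..k}. psi (vs j' - vs j) \<in> P} \<le> card {l'\<in>{1..k}. psi (vs l' - vs l) \<in> P}"
proof -
  define g where "g j' = (SOME l'. l' \<in> {1..k} \<and> (vs j' - vs j + vs l) - vs l' \<in> Q)" for j'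
  have g: "g j' \<in> {1..k} \<and> (vs j' - vs j + vs l) - vs (g j') \<in> Q" for j'
    unfolding g_def by (rule someI_ex) (use cover in blast)
  have inj: "inj_on g {j'\<in>{1..k}. psi (vs j' - vs j) \<in> P}"
  proof (rule inj_onI)
    fix j1 j2 assume j1: "j1 \<in> {j'\<in>{1..k}. psi (vs j' - vs j) \<in> P}"
      and j2: "j2 \<in> {j'\<in>{1..k}. psi (vs j' - vs j) \<in> P}" and e: "g j1 = g j2"
    have "((vs j1 - vs j + vs l) - vs (g j1)) - ((vs j2 - vs j + vs l) - vs (g j2)) \<in> Q"
      using g Qm by blast
    moreover have "((vs j1 - vs j + vs l) - vs (g j1)) - ((vs j2 - vs j + vs l) - vs (g j2)) = vs j1 - vs j2"
      using e by (simp add: algebra_simps)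
    ultimately show "j1 = j2" using disj j1 j2 by auto
  qed
  have into: "g ` {j'\<in>{1..k}. psi (vs j' - vs j) \<in> P} \<subseteq> {l'\<in>{1..k}. psi (vs l' - vs l) \<in> P}"
  proof
    fix y assume "y \<in> g ` {j'\<in>{1..k}. psi (vs j' - vs j) \<in> P}"
    then obtain j' where j': "j' \<in> {1..k}" "psi (vs j' - vs j) \<in> P" and y: "y = g j'" by auto
    define q where "q = (vs j' - vs j + vs l) - vs (g j')"
    have q: "q \<in> Q" using g q_def by blast
    have "vs (g j') - vs l = (vs j' - vs j) - q" unfolding q_def by (simp add: algebra_simps)
    hence "psi (vs (g j') - vs l) = psi (vs j' - vs j) - psi q" using psim by simp
    hence "psi (vs (g j') - vs l) \<in> P" using Pm j' psiQ q by simp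
    thus "y \<in> {l'\<in>{1..k}. psi (vs l' - vs l) \<in> P}" using g y by auto
  qed
  show ?thesis by (rule card_inj_on_le[OF inj into]) simp
qed

lemma dotp_add: "dotp f (a + b) = dotp f a + dotp f b"
  unfolding dotp_def by (simp add: distrib_left sum.distrib)

lemma dotp_diff: "dotp f (a - b) = dotp f a - dotp f b"
  unfolding dotp_def by (simp add: right_diff_distrib sum_subtractf)

lemma dotp_zero: "dotp f 0 = 0"
  unfolding dotp_def by simp

lemma perp_diff: "a \<in> perp V \<Longrightarrow> b \<in> perp V \<Longrightarrow> a - b \<in> perp V"
  unfolding perp_def by (simp add: dotp_diff)

lemma perp_add: "a \<in> perp V \<Longrightarrow> b \<in> perp V \<Longrightarrow> a + b \<in> perp V"
  unfolding perp_def by (simp add: dotp_add)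

lemma perp_zero: "0 \<in> perp V"
  unfolding perp_def by (simp add: dotp_zero)

lemma projT_add: "projT (a + b) = projT a + projT b"
  unfolding projT_def by (auto simp: fun_eq_iff)

lemma projT_diff: "projT (a - b) = projT a - projT b"
  unfolding projT_def by (auto simp: fun_eq_iff)

lemma mat_app_diff: "mat_app M (a - b) = mat_app M a - mat_app M b"
  unfolding mat_app_def by (auto simp: fun_eq_iff right_diff_distrib sum_subtractf)

lemma vsum_diff: "vsum a c - vsum b c = vsum (a - b) (0::('a::ab_group_add,'t) vecs)"
  unfolding vsum_def by (auto simp: fun_eq_iff split: sum.splits)

lemma compat_iff: "x \<in> compat (V, v) \<longleftrightarrow> x - v \<in> perp V"
proof -
  have "compat (V, v) = (\<lambda>m. m + v) ` perp V"
    unfolding compat_def by (simp add: plus_fun_def)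
  also have "x \<in> \<dots> \<longleftrightarrow> x - v \<in> perp V"
    by (auto simp: image_iff) (metis diff_add_cancel)
  finally show ?thesis .
qed

lemma dotp_transp: "dotp f (mat_app M x) = dotp (mat_app (mat_transp M) f) x"
proof -
  have "dotp f (mat_app M x) = (\<Sum>i\<in>UNIV. \<Sum>j\<in>UNIV. f i * M i j * x j)"
    unfolding dotp_def mat_app_def by (simp add: sum_distrib_left mult.assoc)
  also have "\<dots> = (\<Sum>j\<in>UNIV. \<Sum>i\<in>UNIV. f i * M i j * x j)"
    by (rule sum.swap)
  also have "\<dots> = dotp (mat_app (mat_transp M) f) x"
    unfolding dotp_def mat_app_def mat_transp_def
    by (simp add: sum_distrib_left sum_distrib_right mult_ac)
  finally show ?thesis .
qed

lemma sum_split_plus: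
  fixes g :: "('s::finite + 't::finite) \<times> bool \<Rightarrow> 'a::comm_monoid_add"
  shows "sum g UNIV = sum (\<lambda>(i,b). g (Inl i, b)) UNIV + sum (\<lambda>(i,b). g (Inr i, b)) UNIV"
proof -
  let ?L = "(\<lambda>(i,b). (Inl i, b)) ` (UNIV :: ('s \<times> bool) set)"
  let ?R = "(\<lambda>(i,b). (Inr i, b)) ` (UNIV :: ('t \<times> bool) set)"
  have U: "(UNIV :: (('s + 't) \<times> bool) set) = ?L \<union> ?R"
    by (auto simp: image_iff) (metis old.sum.exhaust)
  have D: "?L \<inter> ?R = {}" by auto
  have "sum g UNIV = sum g ?L + sum g ?R"
    unfolding U by (rule sum.union_disjoint) (use D in auto)
  moreover have "sum g ?L = sum (\<lambda>(i,b). g (Inl i, b)) UNIV"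
    by (subst sum.reindex) (auto simp: inj_on_def case_prod_unfold)
  moreover have "sum g ?R = sum (\<lambda>(i,b). g (Inr i, b)) UNIV"
    by (subst sum.reindex) (auto simp: inj_on_def case_prod_unfold)
  ultimately show ?thesis by simp
qed

lemma dotp_vsum0: "dotp f (vsum s (0::('a::comm_ring_1,'t::finite) vecs)) = dotp (projS f) (s :: ('a,'s::finite) vecs)"
  unfolding dotp_def
  by (subst sum_split_plus) (simp add: vsum_def projS_def case_prod_unfold)

theorem theorem6:
  fixes VS :: "('a::comm_ring_1, 's::finite) vecs set"
    and vs :: "nat \<Rightarrow> ('a, 's) vecs"
    and k :: nat
    and VT :: "('a, 't::finite) vecs set"
    and vT :: "('a, 't) vecs"
    and \<Sigma> :: "('a, 's + 't) mat"
  assumes scalars: "is_Zd_ring TYPE('a) \<or> is_real_ring TYPE('a)"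
    and VS_iso: "isotropic VS"
    and part_disj: "\<forall>j\<in>{1..k}. \<forall>l\<in>{1..k}. j \<noteq> l \<longrightarrow> compat (VS, vs j) \<inter> compat (VS, vs l) = {}"
    and part_cover: "(\<Union>j\<in>{1..k}. compat (VS, vs j)) = UNIV"
    and VT_iso: "isotropic VT"
    and sympl: "symplectic \<Sigma>"
  shows "(\<forall>j\<in>{1..k}. \<forall>l\<in>{1..k}.
            marginalT (sympl_act \<Sigma> (prod_state (VS, vs j) (VT, vT))) =
            marginalT (sympl_act \<Sigma> (prod_state (VS, vs l) (VT, vT)))
          \<or> marginalT (sympl_act \<Sigma> (prod_state (VS, vs j) (VT, vT))) \<inter>
            marginalT (sympl_act \<Sigma> (prod_state (VS, vs l) (VT, vT))) = {})
       \<and> (\<forall>j\<in>{1..k}. \<forall>l\<in>{1..k}.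
            card {j'\<in>{1..k}. marginalT (sympl_act \<Sigma> (prod_state (VS, vs j') (VT, vT))) =
                              marginalT (sympl_act \<Sigma> (prod_state (VS, vs j) (VT, vT)))}
          = card {l'\<in>{1..k}. marginalT (sympl_act \<Sigma> (prod_state (VS, vs l') (VT, vT))) =
                              marginalT (sympl_act \<Sigma> (prod_state (VS, vs l) (VT, vT)))})"
proof -
  define V' where "V' = {f. mat_app (mat_transp \<Sigma>) f \<in> subsum VS VT}"
  define P where "P = projT ` perp V'"
  define w where "w j = mat_app \<Sigma> (vsum (vs j) vT)" for j
  define Mg where "Mg j = marginalT (sympl_act \<Sigma> (prod_state (VS, vs j) (VT, vT)))" for j
  have Pm: "a \<in> P \<Longrightarrow> b \<in> P \<Longrightarrow> a - b \<in> P" for a b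
    unfolding P_def by (auto simp: image_iff) (metis projT_diff perp_diff)
  have Pp: "a \<in> P \<Longrightarrow> b \<in> P \<Longrightarrow> a + b \<in> P" for a b
    unfolding P_def by (auto simp: image_iff) (metis projT_add perp_add)
  have P0: "0 \<in> P"
  proof -
    have "projT (0::('a,'s+'t) vecs) = 0" by (simp add: projT_def fun_eq_iff)
    thus ?thesis unfolding P_def using perp_zero by (metis image_eqI)
  qed
  have Mg_eq: "Mg j = {y. y - projT (w j) \<in> P}" for j
  proof -
    have "compat (sympl_act \<Sigma> (prod_state (VS, vs j) (VT, vT))) = (\<lambda>m. m + w j) ` perp V'"
      unfolding compat_def sympl_act_def prod_state_def V'_def w_def by (simp add: plus_fun_def)
    hence "Mg j = (\<lambda>m. projT m + projT (w j)) ` perp V'"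
      unfolding Mg_def marginalT_def by (simp add: image_image projT_add)
    also have "\<dots> = {y. y - projT (w j) \<in> P}"
      unfolding P_def by (auto simp: image_iff) (metis diff_add_cancel)
    finally show ?thesis .
  qed
  have Mg_same: "Mg j = Mg l \<longleftrightarrow> projT (w j) - projT (w l) \<in> P" for j l
  proof
    assume "Mg j = Mg l"
    moreover have "projT (w j) \<in> Mg j" using Mg_eq P0 by simp
    ultimately show "projT (w j) - projT (w l) \<in> P" using Mg_eq by simp
  next
    assume h: "projT (w j) - projT (w l) \<in> P"
    have "y - projT (w j) \<in> P \<longleftrightarrow> y - projT (w l) \<in> P" for y
    proof
      assume "y - projT (w j) \<in> P"
      from Pp[OF this h] show "y - projT (w l) \<in> P" by simp
    next
      assume "y - projT (w l) \<in> P"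
      from Pm[OF this h] show "y - projT (w j) \<in> P" by simp
    qed
    thus "Mg j = Mg l" using Mg_eq by auto
  qed
  have part1: "Mg j = Mg l \<or> Mg j \<inter> Mg l = {}" for j l
  proof (rule ccontr)
    assume "\<not> ?thesis"
    then obtain y where "y - projT (w j) \<in> P" "y - projT (w l) \<in> P" "Mg j \<noteq> Mg l"
      using Mg_eq by auto
    from Pm[OF this(2,1)] this(3) show False using Mg_same by simp
  qed
  define psi where "psi s = projT (mat_app \<Sigma> (vsum s 0))" for s :: "('a,'s) vecs"
  have psim: "psi (a - b) = psi a - psi b" for a b
    unfolding psi_def by (simp only: vsum_diff[of a 0 b, symmetric] mat_app_diff projT_diff)
  have psiQ: "psi q \<in> P" if q: "q \<in> perp VS" for q
  proof -
    have "vsum q 0 \<in> perp (subsum VS VT)"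
      using q unfolding perp_def subsum_def by (simp add: dotp_vsum0)
    hence "mat_app \<Sigma> (vsum q 0) \<in> perp V'"
      unfolding perp_def V'_def by (simp add: dotp_transp)
    thus ?thesis unfolding psi_def P_def by blast
  qed
  have wdiff: "projT (w j) - projT (w l) = psi (vs j - vs l)" for j l
    unfolding w_def psi_def by (simp only: vsum_diff[of "vs j" vT "vs l", symmetric] mat_app_diff projT_diff)
  have cover: "\<exists>j\<in>{1..k}. x - vs j \<in> perp VS" for x
    using part_cover compat_iff by blast
  have disj: "j = l" if "j \<in> {1..k}" "l \<in> {1..k}" "vs j - vs l \<in> perp VS" for j l
  proof (rule ccontr)
    assume "j \<noteq> l"
    have "vs j \<in> compat (VS, vs j)" unfolding compat_iff using perp_zero by simp
    moreover have "vs j \<in> compat (VS, vs l)" unfolding compat_iff using that(3) by simp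
    ultimately show False using part_disj that \<open>j \<noteq> l\<close> by blast
  qed
  have cls: "{j'\<in>{1..k}. Mg j' = Mg j} = {j'\<in>{1..k}. psi (vs j' - vs j) \<in> P}" for j
    using Mg_same wdiff by presburger
  have le: "card {j'\<in>{1..k}. Mg j' = Mg j} \<le> card {l'\<in>{1..k}. Mg l' = Mg l}"
    if "l \<in> {1..k}" for j l
    unfolding cls
    by (rule generic_card_le[where Q="perp VS", OF perp_diff Pm psim psiQ cover disj that])
  have fin: "(\<forall>j\<in>{1..k}. \<forall>l\<in>{1..k}. Mg j = Mg l \<or> Mg j \<inter> Mg l = {}) \<and>
     (\<forall>j\<in>{1..k}. \<forall>l\<in>{1..k}. card {j'\<in>{1..k}. Mg j' = Mg j} = card {l'\<in>{1..k}. Mg l' = Mg l})"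
  proof (intro conjI ballI)
    fix j l assume "j \<in> {1..k}" "l \<in> {1..k}"
    show "card {j'\<in>{1..k}. Mg j' = Mg j} = card {l'\<in>{1..k}. Mg l' = Mg l}"
      by (rule le_antisym[OF le[OF \<open>l \<in> {1..k}\<close>] le[OF \<open>j \<in> {1..k}\<close>]])
  next
    fix j l show "Mg j = Mg l \<or> Mg j \<inter> Mg l = {}" by (rule part1)
  qed
  show ?thesis using fin unfolding Mg_def .
qed

end
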